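(* Suppose $\boldsymbol{\phi}\in\mathcal{D}_{\boldsymbol{\phi}}(\boldsymbol{r})$ satisfies condition (SC). Then for any $(a,k)\in\mathcal{S}$ and $i\in\mathcal{V}$: if $\phi_{i0}(a,k)>0$ then $\frac{\partial T}{\partial t_i(a,k)}\ge\frac{\partial T}{\partial t_i(a,k+1)}$; and for all $j\in\mathcal{V}$ with $(i,j)\in\mathcal{E}$ and $\phi_{ij}(a,k)>0$, $\frac{\partial T}{\partial t_i(a,k)}\ge\frac{\partial T}{\partial t_j(a,k)}$. Moreover, if $t_i(a,k)>0$, both inequalities hold strictly.
   Context: Service-chain computing network model. $\mathcal{G}=(\mathcal{V},\mathcal{E})$ is a directed, strongly connected graph whose links are bidirectional ($(i,j)\in\mathcal{E}\Rightarrow(j,i)\in\mathcal{E}$). $\mathcal{A}$ is a finite set of applications; application $a$ has a destination $d_a\in\mathcal{V}$ and a chain of $|\mathcal{T}_a|$ tasks performed in order. The set of stages is $\mathcal{S}=\{(a,k): a\in\mathcal{A}, k=0,1,\dots,|\mathcal{T}_a|\}$; stage $(a,k)$ denotes packets that have completed the first $k$ tasks of $a$, and has packet size $L_{(a,k)}>0$. Exogenous input rates are $r_i(a)\ge 0$ (stage $(a,0)$ packets injected at node $i$), $\boldsymbol{r}=[r_i(a)]$. The forwarding strategy $\boldsymbol{\phi}=[\phi_{ij}(a,k)]_{(a,k)\in\mathcal{S},i\in\mathcal{V},j\in\{0\}\cup\mathcal{V}}$ has $\phi_{ij}(a,k)\in[0,1]$; for $j\in\mathcal{V}$ it is the fraction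 of node $i$'s stage-$(a,k)$ traffic sent to node $j$ (with $\phi_{ij}(a,k)=0$ if $(i,j)\notin\mathcal{E}$), and $\phi_{i0}(a,k)$ is the fraction sent to $i$'s local processor, which converts each stage-$(a,k)$ packet into one stage-$(a,k+1)$ packet; $\phi_{i0}(a,|\mathcal{T}_a|)=0$. Flow conservation: $\sum_{j\in\{0\}\cup\mathcal{V}}\phi_{ij}(a,k)=0$ if $k=|\mathcal{T}_a|$ and $i=d_a$, and $=1$ otherwise. Traffic $t_i(a,k)$ satisfies $t_i(a,0)=\sum_{j\in\mathcal{V}}t_j(a,0)\phi_{ji}(a,0)+r_i(a)$ and, for $k\ge1$, $t_i(a,k)=\sum_{j\in\mathcal{V}}t_j(a,k)\phi_{ji}(a,k)+t_i(a,k-1)\phi_{i0}(a,k-1)$. Link flows $f_{ij}(a,k)=t_i(a,k)\phi_{ij}(a,k)$, processor inputs $g_i(a,k)=t_i(a,k)\phi_{i0}(a,k)$, total link flow $F_{ij}=\sum_{(a,k)\in\mathcal{S}}L_{(a,k)}f_{ij}(a,k)$, computation workload $G_i=\sum_{(a,k)\in\mathcal{S}}w_i(a,k)g_i(a,k)$ with weights $w_i(a,k)>0$. Link costs $D_{ij}(\cdot)$ and computation costs $C_i(\cdot)$ are (strictly) increasing, continuously differentiable, convex functions (possibly taking value $+\infty$ outside a domain). Total cost $T(\boldsymbol{\phi})=\sum_{(i,j)\in\mathcal{E}}D_{ij}(F_{ij})+\sum_{i\in\mathcal{V}}C_i(G_i)$. The feasible set $\mathcal{D}_{\boldsymbol{\phi}}(\boldsymbol{r})$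 consists of $\boldsymbol{\phi}$ satisfying flow conservation with all $D_{ij}(F_{ij})<\infty$ and $C_i(G_i)<\infty$. Marginal quantities: $\partial T/\partial t_i(a,k)$ is the marginal total cost of an additional exogenous injection of stage-$(a,k)$ traffic at node $i$ (with $\boldsymbol{\phi}$ fixed); it satisfies $\partial T/\partial t_{d_a}(a,|\mathcal{T}_a|)=0$, for $k=|\mathcal{T}_a|$: $\frac{\partial T}{\partial t_i(a,k)}=\sum_{j\in\mathcal{V}}\phi_{ij}(a,k)\big(L_{(a,k)}D'_{ij}(F_{ij})+\frac{\partial T}{\partial t_j(a,k)}\big)$, and for $k<|\mathcal{T}_a|$: $\frac{\partial T}{\partial t_i(a,k)}=\phi_{i0}(a,k)\big(w_i(a,k)C'_i(G_i)+\frac{\partial T}{\partial t_i(a,k+1)}\big)+\sum_{j\in\mathcal{V}}\phi_{ij}(a,k)\big(L_{(a,k)}D'_{ij}(F_{ij})+\frac{\partial T}{\partial t_j(a,k)}\big)$. Modified marginals: $\delta_{ij}(a,k)=L_{(a,k)}D'_{ij}(F_{ij})+\frac{\partial T}{\partial t_j(a,k)}$ for $j\in\mathcal{V}$ with $(i,j)\in\mathcal{E}$, $\delta_{i0}(a,k)=w_i(a,k)C'_i(G_i)+\frac{\partial T}{\partial t_i(a,k+1)}$ for $k<|\mathcal{T}_a|$, and $\delta_{ij}(a,k)=\infty$ for $(i,j)\notin\mathcal{E}$ and $\delta_{i0}(a,|\mathcal{T}_a|)=\infty$. Condition (SC): for all $i\in\mathcal{V}$, $j\in\{0\}\cup\mathcal{V}$,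 $(a,k)\in\mathcal{S}$, $\delta_{ij}(a,k)=\min_{j'\in\{0\}\cup\mathcal{V}}\delta_{ij'}(a,k)$ if $\phi_{ij}(a,k)>0$ and $\delta_{ij}(a,k)\ge\min_{j'}\delta_{ij'}(a,k)$ if $\phi_{ij}(a,k)=0$. *)

theory Defs
  imports "HOL-Analysis.Analysis"
begin

text \<open>Vertices have type 'v, applications type 'a.  The forwarding variables are
  phi i j a k  with  j :: 'v option : phi i (Some j) a k is the fraction of node i's
  stage-(a,k) traffic sent to neighbour j, and phi i None a k is the fraction
  phi_{i0}(a,k) sent to the local processor.  K a is the chain length |T_a|,
  d a the destination, L a k the packet size L_(a,k), w i a k the weight w_i(a,k).
  Cost functions are real valued on a domain [0, cap) (cap an extended real > 0);
  outside this domain the cost is +infinity.  Dd/Cd are their derivatives.\<close>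

definition stages :: "'a set \<Rightarrow> ('a \<Rightarrow> nat) \<Rightarrow> ('a \<times> nat) set" where
  "stages A K = {(a, k). a \<in> A \<and> k \<le> K a}"

definition outs :: "'v set \<Rightarrow> 'v option set" where
  "outs V = insert None (Some ` V)"

definition cost_dom :: "ereal \<Rightarrow> real set" where
  "cost_dom cap = {x. 0 \<le> x \<and> ereal x < cap}"

definition cost_fun :: "(real \<Rightarrow> real) \<Rightarrow> (real \<Rightarrow> real) \<Rightarrow> ereal \<Rightarrow> bool" where
  "cost_fun f f' cap \<longleftrightarrow>
     0 < cap \<and>
     strict_mono_on (cost_dom cap) f \<and>
     convex_on (cost_dom cap) f \<and>
     (\<forall>x\<in>cost_dom cap. (f has_real_derivative f' x) (at x within cost_dom cap)) \<and>
     continuous_on (cost_dom cap) f'"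

definition linkflow ::
  "'a set \<Rightarrow> ('a \<Rightarrow> nat) \<Rightarrow> ('a \<Rightarrow> nat \<Rightarrow> real) \<Rightarrow> ('v \<Rightarrow> 'a \<Rightarrow> nat \<Rightarrow> real)
   \<Rightarrow> ('v \<Rightarrow> 'v option \<Rightarrow> 'a \<Rightarrow> nat \<Rightarrow> real) \<Rightarrow> 'v \<Rightarrow> 'v \<Rightarrow> real" where
  "linkflow A K L t phi i j = (\<Sum>(a, k)\<in>stages A K. L a k * (t i a k * phi i (Some j) a k))"

definition workload ::
  "'a set \<Rightarrow> ('a \<Rightarrow> nat) \<Rightarrow> ('v \<Rightarrow> 'a \<Rightarrow> nat \<Rightarrow> real) \<Rightarrow> ('v \<Rightarrow> 'a \<Rightarrow> nat \<Rightarrow> real)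
   \<Rightarrow> ('v \<Rightarrow> 'v option \<Rightarrow> 'a \<Rightarrow> nat \<Rightarrow> real) \<Rightarrow> 'v \<Rightarrow> real" where
  "workload A K w t phi i = (\<Sum>(a, k)\<in>stages A K. w i a k * (t i a k * phi i None a k))"

definition is_traffic ::
  "'v set \<Rightarrow> 'a set \<Rightarrow> ('a \<Rightarrow> nat) \<Rightarrow> ('v \<Rightarrow> 'a \<Rightarrow> real)
   \<Rightarrow> ('v \<Rightarrow> 'v option \<Rightarrow> 'a \<Rightarrow> nat \<Rightarrow> real) \<Rightarrow> ('v \<Rightarrow> 'a \<Rightarrow> nat \<Rightarrow> real) \<Rightarrow> bool" where
  "is_traffic V A K r phi t \<longleftrightarrow>
     (\<forall>i\<in>V. \<forall>(a, k)\<in>stages A K. 0 \<le> t i a k) \<and>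
     (\<forall>i\<in>V. \<forall>a\<in>A.
        t i a 0 = (\<Sum>j\<in>V. t j a 0 * phi j (Some i) a 0) + r i a \<and>
        (\<forall>k. 1 \<le> k \<and> k \<le> K a \<longrightarrow>
           t i a k = (\<Sum>j\<in>V. t j a k * phi j (Some i) a k) + t i a (k - 1) * phi i None a (k - 1)))"

definition feasible ::
  "'v set \<Rightarrow> ('v \<times> 'v) set \<Rightarrow> 'a set \<Rightarrow> ('a \<Rightarrow> 'v) \<Rightarrow> ('a \<Rightarrow> nat)
   \<Rightarrow> ('a \<Rightarrow> nat \<Rightarrow> real) \<Rightarrow> ('v \<Rightarrow> 'a \<Rightarrow> nat \<Rightarrow> real)
   \<Rightarrow> ('v \<Rightarrow> 'v \<Rightarrow> ereal) \<Rightarrow> ('v \<Rightarrow> ereal)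
   \<Rightarrow> ('v \<Rightarrow> 'a \<Rightarrow> nat \<Rightarrow> real) \<Rightarrow> ('v \<Rightarrow> 'v option \<Rightarrow> 'a \<Rightarrow> nat \<Rightarrow> real) \<Rightarrow> bool" where
  "feasible V E A d K L w capD capC t phi \<longleftrightarrow>
     (\<forall>i\<in>V. \<forall>j\<in>outs V. \<forall>(a, k)\<in>stages A K. 0 \<le> phi i j a k \<and> phi i j a k \<le> 1) \<and>
     (\<forall>i\<in>V. \<forall>j\<in>V. \<forall>(a, k)\<in>stages A K. (i, j) \<notin> E \<longrightarrow> phi i (Some j) a k = 0) \<and>
     (\<forall>i\<in>V. \<forall>a\<in>A. phi i None a (K a) = 0) \<and>
     (\<forall>i\<in>V. \<forall>(a, k)\<in>stages A K.
        (\<Sum>j\<in>outs V. phi i j a k) = (if k = K a \<and> i = d a then 0 else 1)) \<and>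
     (\<forall>(i, j)\<in>E. linkflow A K L t phi i j \<in> cost_dom (capD i j)) \<and>
     (\<forall>i\<in>V. workload A K w t phi i \<in> cost_dom (capC i))"

text \<open>Marginal costs dT i a k = partial T / partial t_i(a,k), characterised by
  the recursive equations of the model.\<close>
definition is_marginal ::
  "'v set \<Rightarrow> 'a set \<Rightarrow> ('a \<Rightarrow> 'v) \<Rightarrow> ('a \<Rightarrow> nat)
   \<Rightarrow> ('a \<Rightarrow> nat \<Rightarrow> real) \<Rightarrow> ('v \<Rightarrow> 'a \<Rightarrow> nat \<Rightarrow> real)
   \<Rightarrow> ('v \<Rightarrow> 'v \<Rightarrow> real \<Rightarrow> real) \<Rightarrow> ('v \<Rightarrow> real \<Rightarrow> real)
   \<Rightarrow> ('v \<Rightarrow> 'a \<Rightarrow> nat \<Rightarrow> real) \<Rightarrow> ('v \<Rightarrow> 'v option \<Rightarrow> 'a \<Rightarrow> nat \<Rightarrow> real)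
   \<Rightarrow> ('v \<Rightarrow> 'a \<Rightarrow> nat \<Rightarrow> real) \<Rightarrow> bool" where
  "is_marginal V A d K L w Dd Cd t phi dT \<longleftrightarrow>
     (\<forall>a\<in>A. dT (d a) a (K a) = 0) \<and>
     (\<forall>i\<in>V. \<forall>(a, k)\<in>stages A K. \<not> (i = d a \<and> k = K a) \<longrightarrow>
        dT i a k =
          (if k < K a
           then phi i None a k * (w i a k * Cd i (workload A K w t phi i) + dT i a (Suc k))
           else 0)
          + (\<Sum>j\<in>V. phi i (Some j) a k *
                 (L a k * Dd i j (linkflow A K L t phi i j) + dT j a k)))"

definition delta ::
  "('v \<times> 'v) set \<Rightarrow> 'a set \<Rightarrow> ('a \<Rightarrow> nat)
   \<Rightarrow> ('a \<Rightarrow> nat \<Rightarrow> real) \<Rightarrow> ('v \<Rightarrow> 'a \<Rightarrow> nat \<Rightarrow> real)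
   \<Rightarrow> ('v \<Rightarrow> 'v \<Rightarrow> real \<Rightarrow> real) \<Rightarrow> ('v \<Rightarrow> real \<Rightarrow> real)
   \<Rightarrow> ('v \<Rightarrow> 'a \<Rightarrow> nat \<Rightarrow> real) \<Rightarrow> ('v \<Rightarrow> 'v option \<Rightarrow> 'a \<Rightarrow> nat \<Rightarrow> real)
   \<Rightarrow> ('v \<Rightarrow> 'a \<Rightarrow> nat \<Rightarrow> real) \<Rightarrow> 'v \<Rightarrow> 'v option \<Rightarrow> 'a \<Rightarrow> nat \<Rightarrow> ereal" where
  "delta E A K L w Dd Cd t phi dT i j a k =
     (case j of
        None \<Rightarrow> (if k < K a
                 then ereal (w i a k * Cd i (workload A K w t phi i) + dT i a (Suc k))
                 else \<infinity>)
      | Some j' \<Rightarrow> (if (i, j') \<in> E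
                    then ereal (L a k * Dd i j' (linkflow A K L t phi i j') + dT j' a k)
                    else \<infinity>))"

definition cond_SC ::
  "'v set \<Rightarrow> ('v \<times> 'v) set \<Rightarrow> 'a set \<Rightarrow> ('a \<Rightarrow> nat)
   \<Rightarrow> ('a \<Rightarrow> nat \<Rightarrow> real) \<Rightarrow> ('v \<Rightarrow> 'a \<Rightarrow> nat \<Rightarrow> real)
   \<Rightarrow> ('v \<Rightarrow> 'v \<Rightarrow> real \<Rightarrow> real) \<Rightarrow> ('v \<Rightarrow> real \<Rightarrow> real)
   \<Rightarrow> ('v \<Rightarrow> 'a \<Rightarrow> nat \<Rightarrow> real) \<Rightarrow> ('v \<Rightarrow> 'v option \<Rightarrow> 'a \<Rightarrow> nat \<Rightarrow> real)
   \<Rightarrow> ('v \<Rightarrow> 'a \<Rightarrow> nat \<Rightarrow> real) \<Rightarrow> bool" where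
  "cond_SC V E A K L w Dd Cd t phi dT \<longleftrightarrow>
     (\<forall>i\<in>V. \<forall>j\<in>outs V. \<forall>(a, k)\<in>stages A K.
        let dl = delta E A K L w Dd Cd t phi dT i;
            m = Min ((\<lambda>j'. dl j' a k) ` outs V)
        in (phi i j a k > 0 \<longrightarrow> dl j a k = m) \<and> (phi i j a k = 0 \<longrightarrow> dl j a k \<ge> m))"

end

theory Submission
  imports Defs
begin


lemma cost_dom_limpt:
  assumes "x \<in> cost_dom cap"
  obtains z where "x < z" "ereal z < cap"
proof -
  from assms have "ereal x < cap" by (simp add: cost_dom_def)
  from ereal_dense2[OF this] obtain z where "ereal x < ereal z" "ereal z < cap" by blast
  then show ?thesis using that by simp
qed

lemma deriv_nonneg:
  assumes cf: "cost_fun f f' cap" and x: "x \<in> cost_dom cap"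
  shows "f' x \<ge> 0"
proof -
  let ?S = "cost_dom cap"
  have mono: "strict_mono_on ?S f" and der: "(f has_real_derivative f' x) (at x within ?S)"
    using cf x by (auto simp: cost_fun_def)
  obtain z where z: "x < z" "ereal z < cap" using cost_dom_limpt[OF x] by blast
  have x0: "0 \<le> x" using x by (simp add: cost_dom_def)
  have "x islimpt ?S"
    unfolding islimpt_approachable
  proof (intro allI impI)
    fix e :: real assume e: "e > 0"
    let ?y = "x + min e (z - x) / 2"
    have "min e (z - x) \<le> z - x" by simp
    then have "?y < z" using z e by (simp add: field_simps)
    then have "ereal ?y < cap" using z(2) by (meson ereal_less_eq(3) le_less_trans less_imp_le)
    moreover have "0 \<le> ?y" using x0 z e by (auto simp: min_def)
    ultimately have "?y \<in> ?S" by (simp add: cost_dom_def)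
    moreover have "?y \<noteq> x" "dist ?y x < e" using z e by (auto simp: dist_real_def min_def)
    ultimately show "\<exists>y\<in>?S. y \<noteq> x \<and> dist y x < e" by blast
  qed
  then have nb: "at x within ?S \<noteq> bot" using trivial_limit_within by blast
  have lim: "((\<lambda>y. (f y - f x) / (y - x)) \<longlongrightarrow> f' x) (at x within ?S)"
    using der by (simp add: has_field_derivative_iff)
  have ev: "eventually (\<lambda>y. 0 \<le> (f y - f x) / (y - x)) (at x within ?S)"
    unfolding eventually_at_filter
  proof (rule always_eventually, intro allI impI)
    fix y assume y: "y \<noteq> x" "y \<in> ?S"
    show "0 \<le> (f y - f x) / (y - x)"
    proof (cases "y < x")
      case True
      then have "f y < f x" using mono y x by (simp add: strict_mono_on_def)
      then show ?thesis using True by (simp add: divide_nonpos_nonpos)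
    next
      case False
      then have "x < y" using y by simp
      then have "f x < f y" using mono y x by (simp add: strict_mono_on_def)
      then show ?thesis using \<open>x < y\<close> by simp
    qed
  qed
  show ?thesis using tendsto_lowerbound[OF lim ev nb] .
qed

lemma deriv_pos:
  assumes cf: "cost_fun f f' cap" and x: "x \<in> cost_dom cap" and xp: "x > 0"
  shows "f' x > 0"
proof -
  let ?S = "cost_dom cap"
  have mono: "strict_mono_on ?S f" and der: "(f has_real_derivative f' x) (at x within ?S)"
    and conv: "convex_on ?S f" and cap: "0 < cap"
    using cf x by (auto simp: cost_fun_def)
  obtain z where z: "x < z" "ereal z < cap" using cost_dom_limpt[OF x] by blast
  have 0: "0 \<in> ?S" using cap by (simp add: cost_dom_def zero_ereal_def)
  have "is_interval ?S"
    unfolding is_interval_1 cost_dom_def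
    by (auto, meson ereal_less_eq(3) le_less_trans)
  then have conn: "connected ?S" by (simp add: is_interval_connected)
  have sub: "{0<..<z} \<subseteq> ?S"
  proof
    fix y assume "y \<in> {0<..<z}"
    then have "0 \<le> y" "y < z" by auto
    then have "ereal y < cap" using z(2) by (meson ereal_less_eq(3) le_less_trans less_imp_le)
    then show "y \<in> ?S" using \<open>0 \<le> y\<close> by (simp add: cost_dom_def)
  qed
  have "{0<..<z} \<subseteq> interior ?S" by (rule interior_maximal[OF sub]) simp
  then have xi: "x \<in> interior ?S" using xp z by auto
  have "f 0 - f x \<ge> f' x * (0 - x)"
    by (rule convex_on_imp_above_tangent[OF conv conn xi 0 der])
  moreover have "f 0 < f x" using mono 0 x xp by (simp add: strict_mono_on_def)
  ultimately have "f' x * x > 0" by simp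
  then show ?thesis using xp by (simp add: zero_less_mult_iff)
qed

theorem proposition4:
  fixes V :: "'v set" and E :: "('v \<times> 'v) set"
    and A :: "'a set" and d :: "'a \<Rightarrow> 'v" and K :: "'a \<Rightarrow> nat"
    and L :: "'a \<Rightarrow> nat \<Rightarrow> real" and r :: "'v \<Rightarrow> 'a \<Rightarrow> real"
    and w :: "'v \<Rightarrow> 'a \<Rightarrow> nat \<Rightarrow> real"
    and D Dd :: "'v \<Rightarrow> 'v \<Rightarrow> real \<Rightarrow> real" and capD :: "'v \<Rightarrow> 'v \<Rightarrow> ereal"
    and C Cd :: "'v \<Rightarrow> real \<Rightarrow> real" and capC :: "'v \<Rightarrow> ereal"
    and phi :: "'v \<Rightarrow> 'v option \<Rightarrow> 'a \<Rightarrow> nat \<Rightarrow> real"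
    and t dT :: "'v \<Rightarrow> 'a \<Rightarrow> nat \<Rightarrow> real"
  assumes finV: "finite V" and finA: "finite A"
    and E_sub: "E \<subseteq> V \<times> V"
    and E_sym: "\<And>i j. (i, j) \<in> E \<Longrightarrow> (j, i) \<in> E"
    and strongly_conn: "\<And>i j. i \<in> V \<Longrightarrow> j \<in> V \<Longrightarrow> (i, j) \<in> E\<^sup>*"
    and dest: "\<And>a. a \<in> A \<Longrightarrow> d a \<in> V"
    and L_pos: "\<And>a k. (a, k) \<in> stages A K \<Longrightarrow> L a k > 0"
    and r_nonneg: "\<And>i a. i \<in> V \<Longrightarrow> a \<in> A \<Longrightarrow> r i a \<ge> 0"
    and w_pos: "\<And>i a k. i \<in> V \<Longrightarrow> (a, k) \<in> stages A K \<Longrightarrow> w i a k > 0"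
    and D_cost: "\<And>i j. (i, j) \<in> E \<Longrightarrow> cost_fun (D i j) (Dd i j) (capD i j)"
    and C_cost: "\<And>i. i \<in> V \<Longrightarrow> cost_fun (C i) (Cd i) (capC i)"
    and traffic: "is_traffic V A K r phi t"
    and feas: "feasible V E A d K L w capD capC t phi"
    and marg: "is_marginal V A d K L w Dd Cd t phi dT"
    and SC: "cond_SC V E A K L w Dd Cd t phi dT"
    and stage: "(a, k) \<in> stages A K" and iV: "i \<in> V"
  shows "(phi i None a k > 0 \<longrightarrow> dT i a k \<ge> dT i a (Suc k))
       \<and> (\<forall>j\<in>V. (i, j) \<in> E \<and> phi i (Some j) a k > 0 \<longrightarrow> dT i a k \<ge> dT j a k)
       \<and> (t i a k > 0 \<longrightarrow>
            (phi i None a k > 0 \<longrightarrow> dT i a k > dT i a (Suc k))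
          \<and> (\<forall>j\<in>V. (i, j) \<in> E \<and> phi i (Some j) a k > 0 \<longrightarrow> dT i a k > dT j a k))"
  proof -
  let ?dl = "delta E A K L w Dd Cd t phi dT i"
  let ?m = "Min ((\<lambda>j'. ?dl j' a k) ` outs V)"
  have aA: "a \<in> A" and kK: "k \<le> K a" using stage by (auto simp: stages_def)
  have F1: "\<forall>i\<in>V. \<forall>j\<in>outs V. \<forall>(a, k)\<in>stages A K. 0 \<le> phi i j a k \<and> phi i j a k \<le> 1"
    and F2: "\<forall>i\<in>V. \<forall>j\<in>V. \<forall>(a, k)\<in>stages A K. (i, j) \<notin> E \<longrightarrow> phi i (Some j) a k = 0"
    and F3: "\<forall>i\<in>V. \<forall>a\<in>A. phi i None a (K a) = 0"
    and F4: "\<forall>i\<in>V. \<forall>(a, k)\<in>stages A K.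
        (\<Sum>j\<in>outs V. phi i j a k) = (if k = K a \<and> i = d a then 0 else 1)"
    and F5: "\<forall>(i, j)\<in>E. linkflow A K L t phi i j \<in> cost_dom (capD i j)"
    and F6: "\<forall>i\<in>V. workload A K w t phi i \<in> cost_dom (capC i)"
    using feas unfolding feasible_def by blast+
  have SC1: "\<forall>j\<in>outs V. (phi i j a k > 0 \<longrightarrow> ?dl j a k = ?m)"
  proof
    fix j assume j: "j \<in> outs V"
    have "\<forall>i\<in>V. \<forall>j\<in>outs V. \<forall>(a, k)\<in>stages A K.
        let dl = delta E A K L w Dd Cd t phi dT i;
            m = Min ((\<lambda>j'. dl j' a k) ` outs V)
        in (phi i j a k > 0 \<longrightarrow> dl j a k = m) \<and> (phi i j a k = 0 \<longrightarrow> dl j a k \<ge> m)"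
      using SC unfolding cond_SC_def by blast
    from bspec[OF bspec[OF bspec[OF this iV] j] stage]
    show "phi i j a k > 0 \<longrightarrow> ?dl j a k = ?m" unfolding Let_def by simp
  qed
  have SCi: "\<And>j. j \<in> outs V \<Longrightarrow> phi i j a k > 0 \<Longrightarrow> ?dl j a k = ?m"
    using SC1 by blast
  have phi_nn': "0 \<le> phi i j a' k'" if j: "j \<in> outs V" "(a', k') \<in> stages A K" for j a' k'
    using bspec[OF bspec[OF bspec[OF F1 iV] j(1)] j(2)] by simp
  have phi_nn: "0 \<le> phi i j a k" if j: "j \<in> outs V" for j
    using phi_nn'[OF j stage] .
  have phi_E: "phi i (Some j) a k = 0" if j: "j \<in> V" "(i, j) \<notin> E" for j
    using bspec[OF bspec[OF bspec[OF F2 iV] j(1)] stage] j(2) by simp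
  have phiK: "phi i None a (K a) = 0"
    using bspec[OF bspec[OF F3 iV] aA] .
  have phisum: "(\<Sum>j\<in>outs V. phi i j a k) = (if k = K a \<and> i = d a then 0 else 1)"
    using bspec[OF bspec[OF F4 iV] stage] by simp
  have lf: "linkflow A K L t phi i j \<in> cost_dom (capD i j)" if ij: "(i, j) \<in> E" for j
    using bspec[OF F5 ij] by simp
  have wl: "workload A K w t phi i \<in> cost_dom (capC i)"
    using bspec[OF F6 iV] .
  have finO: "finite (outs V)" using finV by (simp add: outs_def)
  have sumsplit: "(\<Sum>j\<in>outs V. f j) = f None + (\<Sum>j\<in>V. f (Some j))" for f :: "'v option \<Rightarrow> real"
  proof -
    have "(\<Sum>j\<in>outs V. f j) = f None + (\<Sum>j\<in>Some ` V. f j)"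
      unfolding outs_def using finV by (subst sum.insert) auto
    also have "(\<Sum>j\<in>Some ` V. f j) = (\<Sum>j\<in>V. f (Some j))"
      by (subst sum.reindex) auto
    finally show ?thesis .
  qed
  have T1: "\<forall>i\<in>V. \<forall>(a, k)\<in>stages A K. 0 \<le> t i a k"
    using traffic unfolding is_traffic_def by blast
  have t_nn: "0 \<le> t i' a' k'" if "i' \<in> V" "(a', k') \<in> stages A K" for i' a' k'
    using bspec[OF bspec[OF T1 that(1)] that(2)] by simp
  have finS: "finite (stages A K)"
  proof -
    have "stages A K = (SIGMA a:A. {..K a})" by (auto simp: stages_def)
    then show ?thesis using finA by simp
  qed
  show ?thesis
  proof (cases "k = K a \<and> i = d a")
    case True
    then have "(\<Sum>j\<in>outs V. phi i j a k) = 0" using phisum by simp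
    then have z: "\<forall>j\<in>outs V. phi i j a k = 0"
      using sum_nonneg_eq_0_iff[OF finO phi_nn] by simp
    have n0: "phi i None a k = 0" using z by (simp add: outs_def)
    have nS: "\<And>j. j \<in> V \<Longrightarrow> phi i (Some j) a k = 0" using z by (simp add: outs_def)
    show ?thesis
    proof (intro conjI impI ballI)
      assume "phi i None a k > 0" then show "dT i a k \<ge> dT i a (Suc k)" using n0 by simp
    next
      fix j assume "j \<in> V" "(i, j) \<in> E \<and> phi i (Some j) a k > 0"
      then show "dT i a k \<ge> dT j a k" using nS by simp
    next
      assume "phi i None a k > 0" then show "dT i a k > dT i a (Suc k)" using n0 by simp
    next
      fix j assume "j \<in> V" "(i, j) \<in> E \<and> phi i (Some j) a k > 0"
      then show "dT i a k > dT j a k" using nS by simp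
    qed
  next
    case False
    then have s1: "(\<Sum>j\<in>outs V. phi i j a k) = 1" using phisum by simp
    have "\<exists>j0\<in>outs V. phi i j0 a k > 0"
    proof (rule ccontr)
      assume "\<not> ?thesis"
      then have "\<forall>j\<in>outs V. phi i j a k = 0" using phi_nn by force
      then have "(\<Sum>j\<in>outs V. phi i j a k) = 0" by simp
      then show False using s1 by simp
    qed
    then obtain j0 where j0: "j0 \<in> outs V" "phi i j0 a k > 0" by blast
    have "?dl j0 a k \<noteq> \<infinity>"
    proof (cases j0)
      case None
      then have "k \<noteq> K a" using j0 phiK by auto
      then show ?thesis using None kK by (simp add: delta_def)
    next
      case (Some j')
      then have "j' \<in> V" using j0 by (auto simp: outs_def)
      then have "(i, j') \<in> E" using phi_E j0 Some by force
      then show ?thesis using Some by (simp add: delta_def)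
    qed
    moreover have "?dl j0 a k \<noteq> -\<infinity>" by (simp add: delta_def split: option.splits)
    ultimately obtain mr where mr0: "?dl j0 a k = ereal mr" by (cases "?dl j0 a k") auto
    have key: "\<And>j. j \<in> outs V \<Longrightarrow> phi i j a k > 0 \<Longrightarrow> ?dl j a k = ereal mr"
    proof -
      fix j assume j: "j \<in> outs V" "phi i j a k > 0"
      have "?m = ereal mr" using SCi[OF j0] mr0 by simp
      then show "?dl j a k = ereal mr" using SCi[OF j] by simp
    qed
    have Nin: "None \<in> outs V" by (simp add: outs_def)
    have Sin: "\<And>j. j \<in> V \<Longrightarrow> Some j \<in> outs V" by (simp add: outs_def)
    have klt: "k < K a" if p: "phi i None a k > 0"
    proof -
      have "k \<noteq> K a"
      proof
        assume "k = K a" then show False using p phiK by simp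
      qed
      then show ?thesis using kK by simp
    qed
    have dlN: "?dl None a k = ereal (w i a k * Cd i (workload A K w t phi i) + dT i a (Suc k))"
      if "k < K a" using that by (simp add: delta_def)
    have dlS: "?dl (Some j) a k = ereal (L a k * Dd i j (linkflow A K L t phi i j) + dT j a k)"
      if "(i, j) \<in> E" for j using that by (simp add: delta_def)
    have eqN: "w i a k * Cd i (workload A K w t phi i) + dT i a (Suc k) = mr"
      if p: "phi i None a k > 0"
    proof -
      have "?dl None a k = ereal mr" using key[OF Nin p] .
      then show ?thesis using dlN[OF klt[OF p]] by simp
    qed
    have ES: "(i, j) \<in> E" if jV: "j \<in> V" and p: "phi i (Some j) a k > 0" for j
    proof (rule ccontr)
      assume "(i, j) \<notin> E"
      then have "phi i (Some j) a k = 0" using phi_E jV by blast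
      then show False using p by simp
    qed
    have eqS: "L a k * Dd i j (linkflow A K L t phi i j) + dT j a k = mr"
      if jV: "j \<in> V" and p: "phi i (Some j) a k > 0" for j
    proof -
      have "?dl (Some j) a k = ereal mr" using key[OF Sin[OF jV] p] .
      then show ?thesis using dlS[OF ES[OF jV p]] by simp
    qed
    have T0: "(if k < K a then phi i None a k * (w i a k * Cd i (workload A K w t phi i) + dT i a (Suc k)) else 0)
        = phi i None a k * mr"
    proof (cases "phi i None a k > 0")
      case True
      show ?thesis using klt[OF True] eqN[OF True] by simp
    next
      case False
      have "0 \<le> phi i None a k" by (rule phi_nn[OF Nin])
      then have "phi i None a k = 0" using False by linarith
      then show ?thesis by simp
    qed
    have TS: "phi i (Some j) a k * (L a k * Dd i j (linkflow A K L t phi i j) + dT j a k)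
        = phi i (Some j) a k * mr" if jV: "j \<in> V" for j
    proof (cases "phi i (Some j) a k > 0")
      case True
      show ?thesis using eqS[OF jV True] by simp
    next
      case False
      have "0 \<le> phi i (Some j) a k" by (rule phi_nn[OF Sin[OF jV]])
      then have "phi i (Some j) a k = 0" using False by linarith
      then show ?thesis by simp
    qed
    have "dT i a k = (if k < K a then phi i None a k * (w i a k * Cd i (workload A K w t phi i) + dT i a (Suc k)) else 0)
          + (\<Sum>j\<in>V. phi i (Some j) a k * (L a k * Dd i j (linkflow A K L t phi i j) + dT j a k))"
    proof -
      have M: "\<forall>i\<in>V. \<forall>(a, k)\<in>stages A K. \<not> (i = d a \<and> k = K a) \<longrightarrow>
        dT i a k =
          (if k < K a
           then phi i None a k * (w i a k * Cd i (workload A K w t phi i) + dT i a (Suc k))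
           else 0)
          + (\<Sum>j\<in>V. phi i (Some j) a k *
                 (L a k * Dd i j (linkflow A K L t phi i j) + dT j a k))"
        using marg unfolding is_marginal_def by blast
      show ?thesis using bspec[OF bspec[OF M iV] stage] False by auto
    qed
    also have "\<dots> = phi i None a k * mr + (\<Sum>j\<in>V. phi i (Some j) a k * mr)"
      using T0 sum.cong[OF refl TS, of V] by simp
    also have "\<dots> = (\<Sum>j\<in>outs V. phi i j a k) * mr"
      by (simp add: sumsplit sum_distrib_right distrib_right)
    finally have dTi: "dT i a k = mr" using s1 by simp
    have P1: "dT i a (Suc k) + w i a k * Cd i (workload A K w t phi i) = dT i a k \<and>
              (t i a k > 0 \<longrightarrow> Cd i (workload A K w t phi i) > 0)"
      if p: "phi i None a k > 0"
    proof
      show "dT i a (Suc k) + w i a k * Cd i (workload A K w t phi i) = dT i a k"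
        using dTi eqN[OF p] by simp
      show "t i a k > 0 \<longrightarrow> Cd i (workload A K w t phi i) > 0"
      proof
        assume tp: "t i a k > 0"
        have "0 < workload A K w t phi i"
          unfolding workload_def
        proof (rule sum_pos2[OF finS stage])
          show "0 < (case (a, k) of (a, k) \<Rightarrow> w i a k * (t i a k * phi i None a k))"
            using tp p w_pos[OF iV stage] by simp
          fix x assume x: "x \<in> stages A K"
          show "0 \<le> (case x of (a, k) \<Rightarrow> w i a k * (t i a k * phi i None a k))"
          proof -
            obtain a' k' where xe: "x = (a', k')" by (cases x)
            have "0 \<le> phi i None a' k'" using phi_nn'[of None a' k'] x xe by (simp add: outs_def)
            moreover have "0 \<le> t i a' k'" using t_nn iV x xe by simp
            moreover have "0 \<le> w i a' k'" using w_pos iV x xe by (simp add: less_imp_le)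
            ultimately show "0 \<le> (case x of (a, k) \<Rightarrow> w i a k * (t i a k * phi i None a k))"
              using xe by simp
          qed
        qed
        then show "Cd i (workload A K w t phi i) > 0" using deriv_pos[OF C_cost[OF iV] wl] by blast
      qed
    qed
    have P2: "dT j a k + L a k * Dd i j (linkflow A K L t phi i j) = dT i a k \<and>
              (t i a k > 0 \<longrightarrow> Dd i j (linkflow A K L t phi i j) > 0)"
      if jV: "j \<in> V" and ij: "(i, j) \<in> E" and p: "phi i (Some j) a k > 0" for j
    proof
      show "dT j a k + L a k * Dd i j (linkflow A K L t phi i j) = dT i a k"
        using dTi eqS[OF jV p] by simp
      show "t i a k > 0 \<longrightarrow> Dd i j (linkflow A K L t phi i j) > 0"
      proof
        assume tp: "t i a k > 0"
        have "0 < linkflow A K L t phi i j"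
          unfolding linkflow_def
        proof (rule sum_pos2[OF finS stage])
          show "0 < (case (a, k) of (a, k) \<Rightarrow> L a k * (t i a k * phi i (Some j) a k))"
            using tp p L_pos[OF stage] by simp
          fix x assume x: "x \<in> stages A K"
          show "0 \<le> (case x of (a, k) \<Rightarrow> L a k * (t i a k * phi i (Some j) a k))"
          proof -
            obtain a' k' where xe: "x = (a', k')" by (cases x)
            have "0 \<le> phi i (Some j) a' k'" using phi_nn'[of "Some j" a' k'] x xe jV by (simp add: outs_def)
            moreover have "0 \<le> t i a' k'" using t_nn iV x xe by simp
            moreover have "0 \<le> L a' k'" using L_pos x xe by (simp add: less_imp_le)
            ultimately show "0 \<le> (case x of (a, k) \<Rightarrow> L a k * (t i a k * phi i (Some j) a k))"
              using xe by simp
          qed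
        qed
        then show "Dd i j (linkflow A K L t phi i j) > 0"
          using deriv_pos[OF D_cost[OF ij] lf[OF ij]] by blast
      qed
    qed
    have wpos: "w i a k > 0" using w_pos iV stage by simp
    have Lpos: "L a k > 0" using L_pos stage by simp
    have Cnn: "Cd i (workload A K w t phi i) \<ge> 0" using deriv_nonneg[OF C_cost[OF iV] wl] .
    have Dnn: "\<And>j. (i, j) \<in> E \<Longrightarrow> Dd i j (linkflow A K L t phi i j) \<ge> 0"
      using deriv_nonneg D_cost lf by blast
    show ?thesis
    proof (intro conjI impI ballI)
      assume p: "phi i None a k > 0"
      show "dT i a k \<ge> dT i a (Suc k)" using P1[OF p] wpos Cnn by (smt (verit) mult_nonneg_nonneg)
    next
      fix j assume "j \<in> V" "(i, j) \<in> E \<and> phi i (Some j) a k > 0"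
      then show "dT i a k \<ge> dT j a k" using P2[of j] Lpos Dnn[of j] by (smt (verit) mult_nonneg_nonneg)
    next
      assume tp: "t i a k > 0" and p: "phi i None a k > 0"
      show "dT i a k > dT i a (Suc k)" using P1[OF p] tp wpos by (smt (verit) mult_pos_pos)
    next
      fix j assume tp: "t i a k > 0" and "j \<in> V" "(i, j) \<in> E \<and> phi i (Some j) a k > 0"
      then show "dT i a k > dT j a k" using P2[of j] Lpos by (smt (verit) mult_pos_pos)
    qed
  qed
qed

end
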